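(* Let $T$, $\mathcal{S}=\mathcal{S}_+\cup\mathcal{S}_-$, $\Psi$, $U$, $\mu$, $P_\mu$ and $V_\mu$ be as in the context. Consider the discrete-time QBD with phase space $\mathcal{S}$ and transition blocks $$B_{-1}=\begin{bmatrix}0&(I-\mu^{-1}T_{++})^{-1}P_{\mu+-}\\0&V_\mu\end{bmatrix},\quad B_0=0,\quad B_1=\begin{bmatrix}(I-\mu^{-1}T_{++})^{-1}&0\\0&0\end{bmatrix}.$$ Then its $\mathcal{G}$-matrix is $$\mathcal{G}_B=\begin{bmatrix}0&\Psi\\0&V_\mu\end{bmatrix}.$$
   Context: $T$ is the generator of a continuous-time Markov chain on a finite set $\mathcal{S}=\mathcal{S}_+\cup\mathcal{S}_-$ (disjoint, both nonempty), partitioned into blocks $T_{++},T_{+-},T_{-+},T_{--}$ according to $\mathcal{S}_\pm$. $\Psi$ is the minimal nonnegative solution of $T_{+-}+\Psi T_{--}+T_{++}\Psi+\Psi T_{-+}\Psi=0$ (the first-return probability matrix of the unit-rate fluid queue with phase generator $T$, rates $+1$ on $\mathcal{S}_+$ and $-1$ on $\mathcal{S}_-$), and $U:=T_{--}+T_{-+}\Psi$. $\mu>0$ satisfies $\mu\ge\max_i|T_{ii}|$; $P_\mu:=I+\mu^{-1}T$ with blocks $P_{\mu++}$ etc., and $V_\mu:=I+\mu^{-1}U$. A discrete-time quasi-birth-death process (QBD) with transition blocks $L_{-1},L_0,L_1$ is a Markov chain $\{(Y_n,\kappa_n)\}$ on $\mathbb{Z}\times\mathcal{S}$ with $\mathbb{P}[Y_n=k+d,\kappa_n=j\mid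 Y_{n-1}=k,\kappa_{n-1}=i]=(L_d)_{ij}$ for $d\in\{-1,0,1\}$. Its $\mathcal{G}$-matrix has entries $\mathcal{G}_{ij}=\mathbb{P}[\theta<\infty,\kappa_\theta=j\mid Y_0=k,\kappa_0=i]$ with $\theta=\inf\{n>0:Y_n=k-1\}$. Matrices are partitioned into blocks according to $\mathcal{S}_+,\mathcal{S}_-$. *)

theory Defs
  imports "HOL-Analysis.Analysis"
begin

text \<open>Phase space S = S+ \<union> S- is modelled as the sum type 'p + 'm
  (Inl = S+, Inr = S-); both parts are finite and nonempty. Matrices are
  real^'b^'a (rows indexed by 'a, columns by 'b).\<close>

definition is_generator :: "real^'s^'s \<Rightarrow> bool" where
  "is_generator T \<longleftrightarrow> (\<forall>i j. i \<noteq> j \<longrightarrow> 0 \<le> T$i$j) \<and> (\<forall>i. (\<Sum>j\<in>UNIV. T$i$j) = 0)"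

definition blk_pp :: "real^('p::finite+'m::finite)^('p::finite+'m::finite) \<Rightarrow> real^'p^'p" where
  "blk_pp A = (\<chi> i j. A$(Inl i)$(Inl j))"
definition blk_pm :: "real^('p::finite+'m::finite)^('p::finite+'m::finite) \<Rightarrow> real^'m^'p" where
  "blk_pm A = (\<chi> i j. A$(Inl i)$(Inr j))"
definition blk_mp :: "real^('p::finite+'m::finite)^('p::finite+'m::finite) \<Rightarrow> real^'p^'m" where
  "blk_mp A = (\<chi> i j. A$(Inr i)$(Inl j))"
definition blk_mm :: "real^('p::finite+'m::finite)^('p::finite+'m::finite) \<Rightarrow> real^'m^'m" where
  "blk_mm A = (\<chi> i j. A$(Inr i)$(Inr j))"

definition blocks :: "real^'p^'p \<Rightarrow> real^'m^'p \<Rightarrow> real^'p^'m \<Rightarrow> real^'m^'m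
    \<Rightarrow> real^('p::finite+'m::finite)^('p::finite+'m::finite)" where
  "blocks A B C D = (\<chi> i j. case i of
       Inl a \<Rightarrow> (case j of Inl b \<Rightarrow> A$a$b | Inr b \<Rightarrow> B$a$b)
     | Inr a \<Rightarrow> (case j of Inl b \<Rightarrow> C$a$b | Inr b \<Rightarrow> D$a$b))"

definition nonneg_mat :: "real^'b^'a \<Rightarrow> bool" where
  "nonneg_mat X \<longleftrightarrow> (\<forall>i j. 0 \<le> X$i$j)"

definition riccati_sol :: "real^('p::finite+'m::finite)^('p::finite+'m::finite) \<Rightarrow> real^'m^'p \<Rightarrow> bool" where
  "riccati_sol T X \<longleftrightarrow>
     blk_pm T + X ** blk_mm T + blk_pp T ** X + X ** blk_mp T ** X = 0"

definition is_Psi :: "real^('p::finite+'m::finite)^('p::finite+'m::finite) \<Rightarrow> real^'m^'p \<Rightarrow> bool" where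
  "is_Psi T Psi \<longleftrightarrow> nonneg_mat Psi \<and> riccati_sol T Psi \<and>
     (\<forall>X. nonneg_mat X \<and> riccati_sol T X \<longrightarrow> (\<forall>i j. Psi$i$j \<le> X$i$j))"

text \<open>Taboo probabilities of a level-homogeneous QBD with blocks Lm1, L0, L1,
  started in level 0, phase i: entry (i,j) of qbd_taboo Lm1 L0 L1 n k is the
  probability that after n steps the chain is in level k (k \<ge> 0), phase j,
  without having visited level -1 at steps 1..n.\<close>
fun qbd_taboo :: "real^'s^'s \<Rightarrow> real^'s^'s \<Rightarrow> real^'s^'s \<Rightarrow> nat \<Rightarrow> nat \<Rightarrow> real^'s^'s" where
  "qbd_taboo Lm1 L0 L1 0 k = (if k = 0 then mat 1 else 0)"
| "qbd_taboo Lm1 L0 L1 (Suc n) k =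
     qbd_taboo Lm1 L0 L1 n k ** L0
     + (if k > 0 then qbd_taboo Lm1 L0 L1 n (k - 1) ** L1 else 0)
     + qbd_taboo Lm1 L0 L1 n (k + 1) ** Lm1"

text \<open>G-matrix: G_ij = P[theta < \<infinity>, kappa_theta = j | Y_0 = k, kappa_0 = i],
  written as the sum over n of P[theta = n+1, kappa_(n+1) = j].\<close>
definition qbd_G :: "real^'s^'s \<Rightarrow> real^'s^'s \<Rightarrow> real^'s^'s \<Rightarrow> real^'s^'s" where
  "qbd_G Lm1 L0 L1 = (\<chi> i j. \<Sum>n. (qbd_taboo Lm1 L0 L1 n 0 ** Lm1)$i$j)"

end

theory Submission
  imports Defs
begin

lemma mm_add_r: "((A::real^'n^'m) + B) ** C = A ** C + B ** C"
  by (simp add: matrix_matrix_mult_def vec_eq_iff sum.distrib algebra_simps)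
lemma mm_diff_r: "((A::real^'n^'m) - B) ** C = A ** C - B ** C"
  by (simp add: matrix_matrix_mult_def vec_eq_iff sum_subtractf algebra_simps)
lemma mm_diff_l: "(A::real^'n^'m) ** (B - C) = A ** B - A ** C"
  by (simp add: matrix_matrix_mult_def vec_eq_iff sum_subtractf algebra_simps)
lemma mm_scale_l: "(c *\<^sub>R (A::real^'n^'m)) ** B = c *\<^sub>R (A ** B)"
  by (simp add: scalar_matrix_assoc)
lemma mm_scale_r: "(A::real^'n^'m) ** (c *\<^sub>R B) = c *\<^sub>R (A ** B)"
  by (simp add: matrix_matrix_mult_def vec_eq_iff sum_distrib_left algebra_simps)

lemma sum_Plus_UNIV: "(\<Sum>x\<in>(UNIV::('a::finite+'b::finite) set). f x) = (\<Sum>a\<in>UNIV. f (Inl a)) + (\<Sum>b\<in>UNIV. f (Inr b))"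
  by (subst UNIV_Plus_UNIV[symmetric], subst sum.Plus) auto

lemma blocks_nth [simp]:
  "blocks A B C D $ Inl a $ Inl b = A$a$b"
  "blocks A B C D $ Inl a $ Inr c = B$a$c"
  "blocks A B C D $ Inr d $ Inl b = C$d$b"
  "blocks A B C D $ Inr d $ Inr c = D$d$c"
  by (simp_all add: blocks_def)

lemma blocks_eq_iff: "X = blocks A B C D \<longleftrightarrow> (\<forall>a b. X$Inl a$Inl b = A$a$b) \<and> (\<forall>a b. X$Inl a$Inr b = B$a$b)
   \<and> (\<forall>a b. X$Inr a$Inl b = C$a$b) \<and> (\<forall>a b. X$Inr a$Inr b = D$a$b)"
  apply (auto simp: vec_eq_iff)
  subgoal for i j by (cases i; cases j) auto
  done

lemma blocks_mult: "blocks A B C D ** blocks A' B' C' D' =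
   blocks (A ** A' + B ** C') (A ** B' + B ** D') (C ** A' + D ** C') (C ** B' + D ** D')"
  by (simp add: blocks_eq_iff matrix_matrix_mult_def sum_Plus_UNIV)

lemma blocks_add: "blocks A B C D + blocks A' B' C' D' = blocks (A + A') (B + B') (C + C') (D + D')"
  by (simp add: blocks_eq_iff)

lemma blocks_zero: "(0::real^('p::finite+'m::finite)^('p+'m)) = blocks 0 0 0 0"
  by (simp add: blocks_eq_iff)

lemma blocks_one: "(mat 1::real^('p::finite+'m::finite)^('p+'m)) = blocks (mat 1) 0 0 (mat 1)"
  by (simp add: blocks_eq_iff mat_def)

fun mpow :: "real^'n^'n \<Rightarrow> nat \<Rightarrow> real^'n^'n" where
  "mpow A 0 = mat 1"
| "mpow A (Suc n) = mpow A n ** A"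

lemma mpow_comm: "A ** mpow A n = mpow A n ** A"
  by (induction n) (simp_all add: matrix_mul_assoc)


lemma taboo_closed:
  fixes W :: "real^'p::finite^'p" and Q :: "real^'m::finite^'p" and V :: "real^'m^'m"
  shows "qbd_taboo (blocks 0 Q 0 V) 0 (blocks W 0 0 0) n k =
    blocks (if k = n then mpow W n else 0)
           (if k < n \<and> even (n+k) then mpow W ((n+k) div 2) ** Q ** mpow V ((n-k) div 2 - 1) else 0)
           0 (if n = 0 \<and> k = 0 then mat 1 else 0)"
proof (induction n arbitrary: k)
  case 0
  then show ?case by (simp add: blocks_one blocks_zero[symmetric])
next
  case (Suc n)
  have e: "Suc ((n - Suc k) div 2 - 1) = (Suc n - k) div 2 - 1" if "Suc k < n" "even (n + Suc k)" for k
  proof -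
    have "\<exists>m. n - Suc k = 2*m \<and> m \<ge> 1" using that by presburger
    then obtain m where m: "n - Suc k = 2*m" "m \<ge> 1" by blast
    have "Suc n - k = 2*m + 2" using m that by linarith
    then show ?thesis using m by simp
  qed
  have ifm: "(if b then X else 0) ** Y = (if b then X ** Y else 0)" for b and X :: "real^'x::finite^'y::finite" and Y :: "real^'z::finite^'x"
    by simp
  have L: "qbd_taboo (blocks 0 Q 0 V) 0 (blocks W 0 0 0) (Suc n) k =
    blocks (if 0 < k then (if k - 1 = n then mpow W n ** W else 0) else 0)
      ((if Suc k = n then mpow W n ** Q else 0) +
       (if Suc k < n \<and> even (n + Suc k) then mpow W ((n + Suc k) div 2) ** Q ** mpow V ((n - Suc k) div 2 - 1) ** V else 0))
      0 0"
    apply (simp only: qbd_taboo.simps Suc.IH)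
    apply (auto simp: blocks_mult blocks_add blocks_zero[symmetric] ifm simp del: mpow.simps)
    done
  have A: "(if 0 < k then (if k - 1 = n then mpow W n ** W else 0) else 0) = (if k = Suc n then mpow W (Suc n) else 0)"
      by auto
  have B: "(if Suc k = n then mpow W n ** Q else 0) +
       (if Suc k < n \<and> even (n + Suc k) then mpow W ((n + Suc k) div 2) ** Q ** mpow V ((n - Suc k) div 2 - 1) ** V else 0)
     = (if k < Suc n \<and> even (Suc n + k) then mpow W ((Suc n + k) div 2) ** Q ** mpow V ((Suc n - k) div 2 - 1) else 0)"
    proof (cases "Suc k = n")
      case True
      then have "(Suc n + k) div 2 = n" "(Suc n - k) div 2 - 1 = 0" "even (Suc n + k)" "k < Suc n" by auto
      then show ?thesis using True by simp
    next
      case False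
      show ?thesis
      proof (cases "Suc k < n \<and> even (n + Suc k)")
        case True
        then have "mpow V ((n - Suc k) div 2 - 1) ** V = mpow V ((Suc n - k) div 2 - 1)"
          using e[of k] by (metis mpow.simps(2))
        then show ?thesis using True False by (simp add: matrix_mul_assoc[symmetric])
      next
        case c2: False
        have "\<not> (k < Suc n \<and> even (Suc n + k))" using c2 False by presburger
        then show ?thesis using c2 False by (simp only: if_False if_not_P) simp
      qed
    qed
  show ?case unfolding L A B by simp
qed


lemma G_term:
  fixes W :: "real^'p::finite^'p" and Q :: "real^'m::finite^'p" and V :: "real^'m^'m"
  shows "qbd_taboo (blocks 0 Q 0 V) 0 (blocks W 0 0 0) n 0 ** blocks 0 Q 0 V =
    blocks 0 (if even n then mpow W (n div 2) ** Q ** mpow V (n div 2) else 0) 0 (if n = 0 then V else 0)"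
proof -
  have e: "(if 0 = n then mpow W n else 0) ** Q +
      (if 0 < n \<and> even (n + 0) then mpow W ((n + 0) div 2) ** Q ** mpow V ((n - 0) div 2 - 1) else 0) ** V
     = (if even n then mpow W (n div 2) ** Q ** mpow V (n div 2) else 0)"
  proof (cases "n = 0")
    case True then show ?thesis by simp
  next
    case False
    show ?thesis
    proof (cases "even n")
      case True
      then have "Suc (n div 2 - 1) = n div 2" using False by auto
      then have "mpow V (n div 2 - 1) ** V = mpow V (n div 2)" by (metis mpow.simps(2))
      then show ?thesis using True False by (simp add: matrix_mul_assoc[symmetric] del: mpow.simps)
    next
      case c: False
      then show ?thesis using False by simp
    qed
  qed
  show ?thesis
    apply (subst taboo_closed, subst blocks_mult)
    apply (subst e)
    apply (simp add: blocks_zero[symmetric])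
    done
qed

lemma qbd_G_form:
  fixes W :: "real^'p::finite^'p" and Q :: "real^'m::finite^'p" and V :: "real^'m^'m"
  assumes "\<And>a b. (\<lambda>k. (mpow W k ** Q ** mpow V k)$a$b) sums X$a$b"
  shows "qbd_G (blocks 0 Q 0 V) 0 (blocks W 0 0 0) = blocks 0 X 0 V"
proof -
  have s: "(\<lambda>n. (if even n then mpow W (n div 2) ** Q ** mpow V (n div 2) else 0)$a$b) sums X$a$b" for a b
  proof -
    have "(\<lambda>n. (\<lambda>n. (if even n then mpow W (n div 2) ** Q ** mpow V (n div 2) else 0)$a$b) (2*n)) sums X$a$b"
      using assms by simp
    moreover have "strict_mono (\<lambda>n::nat. 2*n)" by (simp add: strict_mono_def)
    ultimately show ?thesis
      by (subst (asm) sums_mono_reindex) (auto elim!: oddE)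
  qed
  have v: "(\<lambda>n. (if n = 0 then V else 0)$a$b) sums V$a$b" for a b
  proof -
    have "(\<lambda>n. (if n = 0 then V else 0)$a$b) sums (\<Sum>n\<in>{0::nat}. (if n = 0 then V else 0)$a$b)"
      by (rule sums_finite) auto
    then show ?thesis by simp
  qed
  show ?thesis
    unfolding qbd_G_def G_term blocks_eq_iff
    using s v by (simp add: sums_iff)
qed


definition mle :: "real^'b^'a \<Rightarrow> real^'b^'a \<Rightarrow> bool" where
  "mle X Y \<longleftrightarrow> (\<forall>i j. X$i$j \<le> Y$i$j)"

lemma mle_refl: "mle X X" by (simp add: mle_def)
lemma mle_trans: "mle X Y \<Longrightarrow> mle Y Z \<Longrightarrow> mle X Z" unfolding mle_def by (meson order_trans)

lemma nonneg_mult: "nonneg_mat (A::real^'n^'m) \<Longrightarrow> nonneg_mat B \<Longrightarrow> nonneg_mat (A ** B)"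
  unfolding nonneg_mat_def matrix_matrix_mult_def by (auto intro!: sum_nonneg)

lemma nonneg_add: "nonneg_mat (A::real^'n^'m) \<Longrightarrow> nonneg_mat B \<Longrightarrow> nonneg_mat (A + B)"
  unfolding nonneg_mat_def by auto

lemma mle_mult: "nonneg_mat (A::real^'n^'m) \<Longrightarrow> nonneg_mat B \<Longrightarrow> mle A A' \<Longrightarrow> mle B B' \<Longrightarrow> mle (A ** B) (A' ** B')"
proof -
  assume a: "nonneg_mat A" "nonneg_mat B" "mle A A'" "mle B B'"
  have "A$i$k * B$k$j \<le> A'$i$k * B'$k$j" for i k j
    using a unfolding nonneg_mat_def mle_def by (meson mult_mono order_trans)
  then show ?thesis unfolding mle_def matrix_matrix_mult_def by (auto intro!: sum_mono)
qed

lemma mle_add: "mle (A::real^'n^'m) A' \<Longrightarrow> mle B B' \<Longrightarrow> mle (A + B) (A' + B')"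
  unfolding mle_def by (auto intro: add_mono)

lemma mle_nonneg: "nonneg_mat A \<Longrightarrow> mle A B \<Longrightarrow> nonneg_mat B"
  unfolding mle_def nonneg_mat_def by (meson order_trans)

definition conv :: "(nat \<Rightarrow> real^'b^'a) \<Rightarrow> real^'b^'a \<Rightarrow> bool" where
  "conv X L \<longleftrightarrow> (\<forall>i j. (\<lambda>n. X n$i$j) \<longlonglongrightarrow> L$i$j)"

lemma conv_const: "conv (\<lambda>n. A) A" by (simp add: conv_def)
lemma conv_add: "conv X A \<Longrightarrow> conv Y B \<Longrightarrow> conv (\<lambda>n. X n + Y n) (A + B)"
  unfolding conv_def by (auto intro!: tendsto_add)
lemma conv_scale: "conv X A \<Longrightarrow> conv (\<lambda>n. c *\<^sub>R X n) (c *\<^sub>R A)"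
  unfolding conv_def by (auto intro!: tendsto_mult)
lemma conv_mult: "conv X (A::real^'n^'m) \<Longrightarrow> conv Y B \<Longrightarrow> conv (\<lambda>n. X n ** Y n) (A ** B)"
  unfolding conv_def matrix_matrix_mult_def by (auto intro!: tendsto_sum tendsto_mult)

lemma mat_sum_mult: "(A::real^'n^'m) ** (\<Sum>k<(n::nat). f k) ** B = (\<Sum>k<n. A ** f k ** B)"
  by (induction n) (simp_all add: matrix_add_ldistrib mm_add_r)

lemma M_mono:
  fixes M Pp :: "real^'p::finite^'p" and y :: "real^'p"
  assumes Pp: "nonneg_mat Pp" and rs: "\<And>a. (\<Sum>b\<in>UNIV. Pp$a$b) \<le> 1"
    and M: "\<And>a c. M$a$c = 2 * (mat 1 :: real^'p^'p)$a$c - Pp$a$c"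
    and pos: "\<And>a. 0 \<le> (M *v y)$a"
  shows "0 \<le> y$a"
proof -
  obtain i where i: "\<And>c. y$i \<le> y$c"
  proof -
    let ?m = "Min (range (\<lambda>c. y$c))"
    have "?m \<in> range (\<lambda>c. y$c)" by (rule Min_in) auto
    then obtain i where "y$i = ?m" by (metis rangeE)
    moreover have "\<And>c. ?m \<le> y$c" by (rule Min_le) auto
    ultimately show ?thesis using that by metis
  qed
  have "0 \<le> y$i"
  proof (rule ccontr)
    assume neg: "\<not> 0 \<le> y$i"
    have "(M *v y)$i = (\<Sum>c\<in>UNIV. (2 * (mat 1 :: real^'p^'p)$i$c) * y$c) - (\<Sum>c\<in>UNIV. Pp$i$c * y$c)"
      by (simp add: matrix_vector_mult_def M left_diff_distrib sum_subtractf)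
    also have "(\<Sum>c\<in>UNIV. (2 * (mat 1 :: real^'p^'p)$i$c) * y$c) = 2 * y$i"
      by (simp add: mat_def if_distrib if_distribR sum.delta cong: if_cong)
    also have "(\<Sum>c\<in>UNIV. Pp$i$c * y$c) \<ge> (\<Sum>c\<in>UNIV. Pp$i$c * y$i)"
      using Pp i unfolding nonneg_mat_def by (auto intro!: sum_mono mult_left_mono)
    moreover have "(\<Sum>c\<in>UNIV. Pp$i$c * y$i) = (\<Sum>c\<in>UNIV. Pp$i$c) * y$i"
      by (simp add: sum_distrib_right)
    moreover have "(\<Sum>c\<in>UNIV. Pp$i$c) * y$i \<ge> 1 * y$i"
      using rs[of i] neg by (intro mult_right_mono_neg) auto
    ultimately have "(M *v y)$i \<le> y$i" by linarith
    then show False using pos[of i] neg by linarith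
  qed
  then show ?thesis using i[of a] by linarith
qed


theorem lemma2:
  fixes T :: "real^('p::finite + 'm::finite)^('p + 'm)"
    and Psi :: "real^'m^'p"
    and mu :: real
  assumes gen: "is_generator T"
    and Psi: "is_Psi T Psi"
    and mu_pos: "mu > 0"
    and mu_ge: "\<forall>i. \<bar>T$i$i\<bar> \<le> mu"
  defines "U \<equiv> blk_mm T + blk_mp T ** Psi"
    and "P \<equiv> mat 1 + (1 / mu) *\<^sub>R T"
    and "V \<equiv> mat 1 + (1 / mu) *\<^sub>R (blk_mm T + blk_mp T ** Psi)"
    and "W \<equiv> matrix_inv (mat 1 - (1 / mu) *\<^sub>R blk_pp T)"
  shows "qbd_G (blocks 0 (W ** blk_pm P) 0 V) 0 (blocks W 0 0 0) = blocks 0 Psi 0 V"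
proof -
  define M where "M = mat 1 - (1 / mu) *\<^sub>R blk_pp T"
  define Q where "Q = W ** blk_pm P"
  define VY where "VY = (\<lambda>Y::real^'m^'p. mat 1 + (1 / mu) *\<^sub>R (blk_mm T + blk_mp T ** Y))"
  have V_VY: "V = VY Psi" by (simp add: V_def VY_def)
  have offd: "\<And>i j. i \<noteq> j \<Longrightarrow> 0 \<le> T$i$j" and rs0: "\<And>i. (\<Sum>j\<in>UNIV. T$i$j) = 0"
    using gen by (auto simp: is_generator_def)
  have Pent: "P$i$j = (if i = j then 1 else 0) + T$i$j / mu" for i j
    by (simp add: P_def mat_def)
  have Pnn: "0 \<le> P$i$j" for i j
  proof (cases "i = j")
    case True
    have "-T$i$i \<le> mu" using mu_ge[rule_format, of i] by linarith
    then have "-1 \<le> T$i$i / mu" using mu_pos by (simp add: le_divide_eq)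
    then show ?thesis using True Pent by simp
  next
    case False then show ?thesis using Pent offd[OF False] mu_pos by simp
  qed
  have Prs: "(\<Sum>j\<in>UNIV. P$i$j) = 1" for i
  proof -
    have "(\<Sum>j\<in>UNIV. P$i$j) = (\<Sum>j\<in>UNIV. (if i = j then 1 else 0)) + (\<Sum>j\<in>UNIV. T$i$j) / mu"
      by (simp add: Pent sum.distrib sum_divide_distrib)
    then show ?thesis using rs0[of i] by simp
  qed
  define Pp where "Pp = blk_pp P"
  have Ppnn: "nonneg_mat Pp" using Pnn by (simp add: Pp_def blk_pp_def nonneg_mat_def)
  have Pprs: "(\<Sum>b\<in>UNIV. Pp$a$b) \<le> 1" for a
  proof -
    have "(\<Sum>j\<in>UNIV. P$Inl a$j) = (\<Sum>b\<in>UNIV. Pp$a$b) + (\<Sum>b\<in>UNIV. P$Inl a$Inr b)"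
      by (simp add: sum_Plus_UNIV Pp_def blk_pp_def)
    moreover have "0 \<le> (\<Sum>b\<in>UNIV. P$Inl a$Inr b)" using Pnn by (simp add: sum_nonneg)
    ultimately show ?thesis using Prs[of "Inl a"] by linarith
  qed
  have Ment: "M$a$c = 2 * (mat 1 :: real^'p^'p)$a$c - Pp$a$c" for a c
    by (simp add: M_def Pp_def blk_pp_def Pent mat_def)
  have Mmono: "\<And>y a. (\<And>a. 0 \<le> (M *v y)$a) \<Longrightarrow> 0 \<le> y$a"
    by (rule M_mono[OF Ppnn Pprs Ment])
  have "\<exists>B. B ** M = mat 1"
    unfolding matrix_left_invertible_ker
  proof (intro allI impI)
    fix x assume x: "M *v x = 0"
    have "0 \<le> x$a" for a using Mmono[of x a] x by simp
    moreover have "0 \<le> (-x)$a" for a using Mmono[of "-x" a] x by (simp add: matrix_vector_mult_def sum_negf vec_eq_iff)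
    ultimately show "x = 0" by (simp add: vec_eq_iff) (meson antisym neg_le_0_iff_le)
  qed
  then obtain B where "B ** M = mat 1" by blast
  then have "M ** B = mat 1" "B ** M = mat 1" using matrix_left_right_inverse by blast+
  then have "M ** W = mat 1 \<and> W ** M = mat 1"
    unfolding W_def M_def[symmetric] matrix_inv_def by (rule someI[where x=B, OF conjI])
  then have MW: "M ** W = mat 1" and WM: "W ** M = mat 1" by auto
  have Wnn: "nonneg_mat W"
    unfolding nonneg_mat_def
  proof (intro allI)
    fix a b
    have "0 \<le> (M *v (\<chi> c. W$c$b))$a" for a
      using arg_cong[OF MW, of "\<lambda>X. X$a$b"] by (simp add: matrix_vector_mult_def matrix_matrix_mult_def mat_def)
    from Mmono[OF this] show "0 \<le> W$a$b" by simp
  qed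
  have Tmpnn: "nonneg_mat (blk_mp T)" using offd by (simp add: nonneg_mat_def blk_mp_def)
  define K where "K = mat 1 + (1 / mu) *\<^sub>R blk_mm T"
  have Knn: "nonneg_mat K" unfolding nonneg_mat_def
  proof (intro allI)
    fix d e
    have "K$d$e = P$Inr d$Inr e" by (simp add: K_def Pent mat_def blk_mm_def)
    then show "0 \<le> K$d$e" using Pnn by simp
  qed
  have Ppm: "blk_pm P = (1 / mu) *\<^sub>R blk_pm T" by (simp add: vec_eq_iff blk_pm_def Pent)
  have Ppmnn: "nonneg_mat (blk_pm P)" using Pnn by (simp add: nonneg_mat_def blk_pm_def)
  have Qnn: "nonneg_mat Q" unfolding Q_def by (rule nonneg_mult[OF Wnn Ppmnn])
  have VYK: "VY Y = K + (1 / mu) *\<^sub>R (blk_mp T ** Y)" for Y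
    by (simp add: VY_def K_def scaleR_right_distrib add.assoc)
  have VYnn: "nonneg_mat Y \<Longrightarrow> nonneg_mat (VY Y)" for Y
    unfolding VYK using Knn nonneg_mult[OF Tmpnn, of Y] mu_pos
    by (simp add: nonneg_mat_def)
  have VYmono: "nonneg_mat Y \<Longrightarrow> mle Y Y' \<Longrightarrow> mle (VY Y) (VY Y')" for Y Y'
    unfolding VYK using mle_mult[OF Tmpnn _ mle_refl, of Y Y'] mu_pos
    by (simp add: mle_def divide_right_mono)
  have ident: "blk_pm P + Y ** VY Y - M ** Y =
      (1 / mu) *\<^sub>R (blk_pm T + Y ** blk_mm T + blk_pp T ** Y + Y ** blk_mp T ** Y)" for Y
    unfolding VY_def M_def Ppm
    by (simp add: matrix_add_ldistrib mm_add_r mm_diff_r mm_scale_l mm_scale_r matrix_mul_assoc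
          scaleR_right_distrib algebra_simps)
  have ric: "riccati_sol T Y \<longleftrightarrow> Y = Q + W ** Y ** VY Y" for Y
  proof
    assume "riccati_sol T Y"
    then have "M ** Y = blk_pm P + Y ** VY Y" using ident[of Y] by (simp add: riccati_sol_def)
    then have "W ** (M ** Y) = W ** (blk_pm P + Y ** VY Y)" by simp
    then show "Y = Q + W ** Y ** VY Y"
      by (simp add: matrix_mul_assoc WM matrix_add_ldistrib Q_def)
  next
    assume "Y = Q + W ** Y ** VY Y"
    then have "M ** Y = M ** (Q + W ** Y ** VY Y)" by simp
    also have "\<dots> = blk_pm P + Y ** VY Y"
      by (simp add: matrix_add_ldistrib Q_def matrix_mul_assoc MW)
    finally have "(1 / mu) *\<^sub>R (blk_pm T + Y ** blk_mm T + blk_pp T ** Y + Y ** blk_mp T ** Y) = 0"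
      using ident[of Y] by simp
    then show "riccati_sol T Y" using mu_pos by (simp add: riccati_sol_def)
  qed
  have Psinn: "nonneg_mat Psi" and Psiric: "riccati_sol T Psi"
    and Psimin: "\<And>X. nonneg_mat X \<Longrightarrow> riccati_sol T X \<Longrightarrow> Psi$i$j \<le> X$i$j" for i j
    using Psi by (auto simp: is_Psi_def)
  define F where "F = (\<lambda>Y. Q + W ** Y ** VY Y)"
  have FPsi: "F Psi = Psi" using Psiric ric[of Psi] by (simp add: F_def)
  have Fnn: "nonneg_mat Y \<Longrightarrow> nonneg_mat (F Y)" for Y
    unfolding F_def by (intro nonneg_add Qnn nonneg_mult Wnn VYnn)
  have Fmono: "nonneg_mat Y \<Longrightarrow> mle Y Y' \<Longrightarrow> mle (F Y) (F Y')" for Y Y'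
    unfolding F_def
    by (intro mle_add mle_refl mle_mult nonneg_mult Wnn VYnn VYmono) auto
  have nn0: "nonneg_mat (0::real^'m^'p)" by (simp add: nonneg_mat_def)
  define Yn where "Yn = (\<lambda>n. (F ^^ n) 0)"
  have Yn_Suc: "Yn (Suc n) = F (Yn n)" for n by (simp add: Yn_def)
  have Ybd: "nonneg_mat (Yn n) \<and> mle (Yn n) Psi" for n
  proof (induction n)
    case 0 then show ?case using Psinn by (simp add: Yn_def nn0 mle_def nonneg_mat_def)
  next
    case (Suc n) then show ?case using Fnn Fmono[of "Yn n" Psi] FPsi by (simp add: Yn_Suc)
  qed
  have Yinc: "mle (Yn n) (Yn (Suc n))" for n
  proof (induction n)
    case 0 then show ?case using Fnn[OF nn0] by (simp add: Yn_def mle_def nonneg_mat_def)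
  next
    case (Suc n) then show ?case using Fmono Ybd by (simp add: Yn_Suc)
  qed
  define t where "t = (\<lambda>k. mpow W k ** Q ** mpow V k)"
  define S where "S = (\<lambda>n. \<Sum>k<n. t k)"
  have Vnn: "nonneg_mat V" unfolding V_VY by (rule VYnn[OF Psinn])
  have t_Suc: "t (Suc k) = W ** t k ** V" for k
    by (simp add: t_def mpow_comm matrix_mul_assoc)
  have tnn: "nonneg_mat (t k)" for k
    by (induction k) (auto simp: t_Suc intro!: nonneg_mult Wnn Vnn, simp add: t_def Qnn)
  have S_Suc: "S (Suc n) = Q + W ** S n ** V" for n
    unfolding S_def sum.lessThan_Suc_shift t_Suc mat_sum_mult by (simp add: t_def)
  have Sbd: "nonneg_mat (S n) \<and> mle (S n) Psi" for n
  proof (induction n)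
    case 0 then show ?case using Psinn by (simp add: S_def mle_def nonneg_mat_def)
  next
    case (Suc n)
    have "mle (Q + W ** S n ** V) (Q + W ** Psi ** V)"
      using Suc by (intro mle_add mle_refl mle_mult nonneg_mult Wnn Vnn) auto
    moreover have "Q + W ** Psi ** V = Psi" using FPsi by (simp add: F_def V_VY)
    ultimately show ?case using Suc
      by (auto simp: S_Suc intro!: nonneg_add Qnn nonneg_mult Wnn Vnn)
  qed
  have YS: "mle (Yn n) (S n)" for n
  proof (induction n)
    case 0 then show ?case by (simp add: S_def Yn_def mle_def)
  next
    case (Suc n)
    have "mle (F (Yn n)) (Q + W ** S n ** V)"
      unfolding F_def V_VY using Suc Ybd[of n]
      by (intro mle_add mle_refl mle_mult nonneg_mult Wnn VYnn VYmono) auto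
    then show ?case by (simp add: Yn_Suc S_Suc)
  qed
  have Sent: "(S n)$a$b = (\<Sum>k<n. t k$a$b)" for n a b by (simp add: S_def)
  have tent_nn: "0 \<le> t k$a$b" for k a b using tnn by (simp add: nonneg_mat_def)
  have summ: "summable (\<lambda>k. t k$a$b)" for a b
    by (rule summableI_nonneg_bounded[where x="Psi$a$b"]) (use tent_nn Sbd Sent in \<open>auto simp: mle_def\<close>)
  define X where "X = (\<chi> a b. \<Sum>k. t k$a$b)"
  have XPsi: "X$a$b \<le> Psi$a$b" for a b
    unfolding X_def using Sbd Sent by (auto simp: mle_def intro!: suminf_le_const summ)
  have SX: "(S n)$a$b \<le> X$a$b" for n a b
    unfolding X_def Sent using summ tent_nn by (auto intro!: sum_le_suminf)
  define Ys where "Ys = (\<chi> a b. SUP n. Yn n$a$b)"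
  have bdd: "bdd_above (range (\<lambda>n. Yn n$a$b))" for a b
    using Ybd by (auto simp: mle_def bdd_above_def)
  have Yconv: "conv Yn Ys"
    unfolding conv_def Ys_def using bdd Yinc
    by (auto intro!: LIMSEQ_incseq_SUP incseq_SucI simp: mle_def)
  have YsX: "Ys$a$b \<le> X$a$b" for a b
    unfolding Ys_def using YS SX by (auto intro!: cSUP_least simp: mle_def) (meson order_trans)
  have Ysnn: "nonneg_mat Ys"
    unfolding nonneg_mat_def Ys_def using Ybd bdd
    by (auto intro!: cSUP_upper2[where x=0] simp: nonneg_mat_def)
  have "conv (\<lambda>n. F (Yn n)) (F Ys)"
    unfolding F_def VY_def
    by (intro conv_add conv_const conv_mult conv_scale Yconv)
  moreover have "conv (\<lambda>n. F (Yn n)) Ys"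
    using Yconv unfolding conv_def Yn_Suc[symmetric] by (auto intro: LIMSEQ_Suc)
  ultimately have "F Ys = Ys"
    unfolding conv_def by (auto simp: vec_eq_iff) (meson LIMSEQ_unique)
  then have "riccati_sol T Ys" using ric[of Ys] by (simp add: F_def)
  then have "Psi$a$b \<le> Ys$a$b" for a b using Psimin Ysnn by blast
  then have XP: "X = Psi" using XPsi YsX by (auto simp: vec_eq_iff) (meson antisym order_trans)
  have "(\<lambda>k. t k$a$b) sums Psi$a$b" for a b
    using summable_sums[OF summ[of a b]] XP unfolding X_def by (simp add: vec_eq_iff)
  then show ?thesis
    unfolding Q_def[symmetric] by (intro qbd_G_form) (simp add: t_def)
qed

end
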